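(* An undirected graph $\mathcal{U}$ is a UEC-representative if and only if $\alpha(\mathcal{U})=\delta(\mathcal{U})$.
   Context: For a DAG $\mathcal{D}$, a trek is a path with no repeated vertices and no collider (a node whose two incident path edges both point into it); the unconditional dependence graph $\mathcal{U}^\mathcal{D}$ is the undirected graph on the nodes of $\mathcal{D}$ in which distinct $v,w$ are adjacent iff there is a trek between them. An undirected graph $\mathcal{U}$ on vertex set $V$ is a UEC-representative if $\mathcal{U}=\mathcal{U}^\mathcal{D}$ for some DAG $\mathcal{D}$ on $V$. A clique is a set of pairwise adjacent vertices (single vertices are cliques). An edge clique cover of $\mathcal{U}$ is a collection of cliques such that every vertex and every edge of $\mathcal{U}$ lies in at least one clique of the collection; the intersection number $\delta(\mathcal{U})$ is the minimum cardinality of an edge clique cover. The independence number $\alpha(\mathcal{U})$ is the maximum cardinality of a set of pairwise nonadjacent vertices. *)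

theory Defs
  imports Main
begin

definition undirected_graph :: "'a set \<Rightarrow> 'a rel \<Rightarrow> bool" where
  "undirected_graph V U \<longleftrightarrow> finite V \<and> U \<subseteq> V \<times> V \<and> sym U \<and> irrefl U"

definition dag :: "'a set \<Rightarrow> 'a rel \<Rightarrow> bool" where
  "dag V D \<longleftrightarrow> D \<subseteq> V \<times> V \<and> acyclic D"

definition trek :: "'a rel \<Rightarrow> 'a list \<Rightarrow> 'a \<Rightarrow> 'a \<Rightarrow> bool" where
  "trek D p v w \<longleftrightarrow> p \<noteq> [] \<and> hd p = v \<and> last p = w \<and> distinct p \<and>
     (\<forall>i. Suc i < length p \<longrightarrow> (p ! i, p ! Suc i) \<in> D \<or> (p ! Suc i, p ! i) \<in> D) \<and>
     (\<forall>i. Suc (Suc i) < length p \<longrightarrow>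
        \<not> ((p ! i, p ! Suc i) \<in> D \<and> (p ! Suc (Suc i), p ! Suc i) \<in> D))"

definition udg :: "'a set \<Rightarrow> 'a rel \<Rightarrow> 'a rel" where
  "udg V D = {(v, w). v \<in> V \<and> w \<in> V \<and> v \<noteq> w \<and> (\<exists>p. trek D p v w)}"

definition UEC_representative :: "'a set \<Rightarrow> 'a rel \<Rightarrow> bool" where
  "UEC_representative V U \<longleftrightarrow> (\<exists>D. dag V D \<and> U = udg V D)"

definition is_clique :: "'a set \<Rightarrow> 'a rel \<Rightarrow> 'a set \<Rightarrow> bool" where
  "is_clique V U C \<longleftrightarrow> C \<noteq> {} \<and> C \<subseteq> V \<and> (\<forall>x\<in>C. \<forall>y\<in>C. x \<noteq> y \<longrightarrow> (x, y) \<in> U)"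

definition edge_clique_cover :: "'a set \<Rightarrow> 'a rel \<Rightarrow> 'a set set \<Rightarrow> bool" where
  "edge_clique_cover V U \<C> \<longleftrightarrow> (\<forall>C\<in>\<C>. is_clique V U C) \<and>
     (\<forall>v\<in>V. \<exists>C\<in>\<C>. v \<in> C) \<and>
     (\<forall>(x, y)\<in>U. \<exists>C\<in>\<C>. x \<in> C \<and> y \<in> C)"

definition intersection_number :: "'a set \<Rightarrow> 'a rel \<Rightarrow> nat" where
  "intersection_number V U = (LEAST k. \<exists>\<C>. edge_clique_cover V U \<C> \<and> finite \<C> \<and> card \<C> = k)"

definition independent_set :: "'a set \<Rightarrow> 'a rel \<Rightarrow> 'a set \<Rightarrow> bool" where
  "independent_set V U S \<longleftrightarrow> S \<subseteq> V \<and> (\<forall>x\<in>S. \<forall>y\<in>S. (x, y) \<notin> U)"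

definition independence_number :: "'a set \<Rightarrow> 'a rel \<Rightarrow> nat" where
  "independence_number V U = Max {card S | S. independent_set V U S}"

end

theory Submission
  imports Defs
begin

lemma trek_common_ancestor:
  assumes "trek D p v w"
  shows "\<exists>t\<in>set p. (t, v) \<in> D\<^sup>* \<and> (t, w) \<in> D\<^sup>*"
proof -
  define n where "n = length p"
  have ne: "p \<noteq> []" and hv: "hd p = v" and lw: "last p = w"
    and ed: "\<And>i. Suc i < n \<Longrightarrow> (p ! i, p ! Suc i) \<in> D \<or> (p ! Suc i, p ! i) \<in> D"
    and nc: "\<And>i. Suc (Suc i) < n \<Longrightarrow> \<not> ((p ! i, p ! Suc i) \<in> D \<and> (p ! Suc (Suc i), p ! Suc i) \<in> D)"
    using assms unfolding trek_def n_def by auto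
  have n0: "n > 0" using ne n_def by auto
  define Q where "Q = (\<lambda>i. Suc i < n \<and> (p ! i, p ! Suc i) \<in> D)"
  define k where "k = (if \<exists>i. Q i then (LEAST i. Q i) else n - 1)"
  have kn: "k < n"
  proof (cases "\<exists>i. Q i")
    case True
    then have "Q (LEAST i. Q i)" by (rule LeastI_ex)
    then show ?thesis using True unfolding k_def Q_def by auto
  qed (use n0 k_def in auto)
  have bwd: "(p ! Suc i, p ! i) \<in> D" if "i < k" for i
  proof -
    have si: "Suc i < n"
    proof (cases "\<exists>i. Q i")
      case True
      then have "Q (LEAST i. Q i)" by (rule LeastI_ex)
      then show ?thesis using True that unfolding k_def Q_def by auto
    qed (use that k_def in auto)
    have "\<not> Q i"
    proof (cases "\<exists>i. Q i")
      case True
      then show ?thesis using not_less_Least[of i Q] that unfolding k_def by auto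
    next
      case False then show ?thesis by auto
    qed
    then show ?thesis using ed[OF si] si unfolding Q_def by auto
  qed
  have fwd: "Suc i < n \<longrightarrow> (p ! i, p ! Suc i) \<in> D" if "k \<le> i" for i
    using that
  proof (induction i rule: dec_induct)
    case base
    show ?case
    proof (cases "\<exists>i. Q i")
      case True
      then have "Q (LEAST i. Q i)" by (rule LeastI_ex)
      then show ?thesis using True unfolding k_def Q_def by auto
    qed (use k_def in auto)
  next
    case (step j)
    show ?case
    proof
      assume a: "Suc (Suc j) < n"
      then have "(p ! j, p ! Suc j) \<in> D" using step by auto
      then show "(p ! Suc j, p ! Suc (Suc j)) \<in> D" using nc[OF a] ed[OF a] by auto
    qed
  qed
  have a1: "j \<le> k \<longrightarrow> (p ! j, p ! 0) \<in> D\<^sup>*" for j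
  proof (induction j)
    case (Suc j)
    then show ?case using bwd[of j] by (auto intro: converse_rtrancl_into_rtrancl)
  qed auto
  have a2: "k \<le> j \<longrightarrow> j < n \<longrightarrow> (p ! k, p ! j) \<in> D\<^sup>*" for j
  proof (induction j)
    case 0 then show ?case by auto
  next
    case (Suc j)
    show ?case
    proof (cases "k = Suc j")
      case False
      then show ?thesis using Suc fwd[of j] by (auto intro: rtrancl_into_rtrancl)
    qed auto
  qed
  have "hd p = p ! 0" using ne by (simp add: hd_conv_nth)
  moreover have "last p = p ! (n - 1)" using ne n_def by (simp add: last_conv_nth)
  moreover have "p ! k \<in> set p" using kn n_def by auto
  ultimately show ?thesis using a1[of k] a2[of "n - 1"] kn hv lw by auto
qed


lemma path_trancl:
  assumes "\<forall>i<m. (g i, g (Suc i)) \<in> D"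
  shows "i < j \<Longrightarrow> j \<le> m \<Longrightarrow> (g i, g j) \<in> D\<^sup>+"
proof (induction j)
  case 0 then show ?case by auto
next
  case (Suc j)
  show ?case
  proof (cases "i = j")
    case True then show ?thesis using assms Suc by auto
  next
    case False
    then have "(g i, g j) \<in> D\<^sup>+" using Suc by auto
    moreover have "(g j, g (Suc j)) \<in> D" using assms Suc by auto
    ultimately show ?thesis by (rule trancl_into_trancl)
  qed
qed

lemma path_inj:
  assumes "acyclic D" "\<forall>i<m. (g i, g (Suc i)) \<in> D" "i \<le> m" "j \<le> m" "g i = g j"
  shows "i = j"
proof (rule ccontr)
  assume "i \<noteq> j"
  then have "i < j \<or> j < i" by auto
  then have "(g i, g j) \<in> D\<^sup>+ \<or> (g j, g i) \<in> D\<^sup>+" using path_trancl[OF assms(2), of i j] path_trancl[OF assms(2), of j i] assms(3,4) by blast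
  then show False using assms(1,5) unfolding acyclic_def by auto
qed

lemma two_cycle:
  assumes "acyclic D" "(a, b) \<in> D" "(b, a) \<in> D" shows False
proof -
  have "(a, a) \<in> D\<^sup>+" using assms by (meson trancl.simps)
  then show False using assms(1) unfolding acyclic_def by auto
qed

lemma common_ancestor_trek:
  assumes acy: "acyclic D" and sx: "(s, x) \<in> D\<^sup>*" and sy: "(s, y) \<in> D\<^sup>*" and xy: "x \<noteq> y"
  shows "\<exists>p. trek D p x y"
proof -
  define P where "P = (\<lambda>mn. \<exists>g h. g 0 = h 0 \<and> g (fst mn) = x \<and> h (snd mn) = y \<and>
     (\<forall>i<fst mn. (g i, g (Suc i)) \<in> D) \<and> (\<forall>i<snd mn. (h i, h (Suc i)) \<in> D))"
  obtain m0 where "(s, x) \<in> D ^^ m0" using sx rtrancl_power by blast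
  then obtain g0 where g0: "g0 0 = s" "g0 m0 = x" "\<forall>i<m0. (g0 i, g0 (Suc i)) \<in> D"
    using relpow_fun_conv by metis
  obtain n0 where "(s, y) \<in> D ^^ n0" using sy rtrancl_power by blast
  then obtain h0 where h0: "h0 0 = s" "h0 n0 = y" "\<forall>i<n0. (h0 i, h0 (Suc i)) \<in> D"
    using relpow_fun_conv by metis
  have "P (m0, n0)" unfolding P_def using g0 h0 by (intro exI[of _ g0] exI[of _ h0]) auto
  then obtain mn where mn: "P mn" and mnmin: "\<forall>z. P z \<longrightarrow> fst mn + snd mn \<le> fst z + snd z"
    using ex_has_least_nat[of P "(m0, n0)" "\<lambda>z. fst z + snd z"] by blast
  define m where "m = fst mn"
  define n where "n = snd mn"
  obtain g h where gh: "g 0 = h 0" "g m = x" "h n = y"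
    and gp: "\<forall>i<m. (g i, g (Suc i)) \<in> D" and hp: "\<forall>i<n. (h i, h (Suc i)) \<in> D"
    using mn unfolding P_def m_def n_def by auto
  have minim: "\<And>m' n'. P (m', n') \<Longrightarrow> m + n \<le> m' + n'"
    using mnmin unfolding m_def n_def by force
  have disj: "g i \<noteq> h j" if "i \<le> m" "1 \<le> j" "j \<le> n" for i j
  proof
    assume eq: "g i = h j"
    have "P (m - i, n - j)" unfolding P_def
      apply (rule exI[of _ "\<lambda>k. g (i + k)"], rule exI[of _ "\<lambda>k. h (j + k)"])
      using eq gh gp hp that by auto
    then have "m + n \<le> (m - i) + (n - j)" by (rule minim)
    then show False using that by auto
  qed
  define f where "f = (\<lambda>k. if k \<le> m then g (m - k) else h (k - m))"
  define N where "N = m + n"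
  have fh: "f k = h (k - m)" if "m \<le> k" for k
    using that gh unfolding f_def by (cases "k = m") auto
  have E: "if Suc i \<le> m then (f (Suc i), f i) \<in> D else (f i, f (Suc i)) \<in> D"
    if "Suc i < Suc N" for i
  proof (cases "Suc i \<le> m")
    case True
    have "m - i = Suc (m - Suc i)" using True by auto
    then have "(g (m - Suc i), g (m - i)) \<in> D" using gp True by auto
    then show ?thesis using True unfolding f_def by auto
  next
    case False
    have "Suc i - m = Suc (i - m)" using False by auto
    then have "(h (i - m), h (Suc i - m)) \<in> D" using hp False that N_def by auto
    then show ?thesis using False fh[of i] fh[of "Suc i"] by auto
  qed
  have inj: "inj_on f {0..<Suc N}"
  proof (rule inj_onI)
    fix a b assume a: "a \<in> {0..<Suc N}" and b: "b \<in> {0..<Suc N}" and eq: "f a = f b"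
    show "a = b"
    proof (cases "a \<le> m"; cases "b \<le> m")
      assume "a \<le> m" "b \<le> m"
      then have "g (m - a) = g (m - b)" using eq unfolding f_def by auto
      then have "m - a = m - b" using path_inj[OF acy gp] by auto
      then show ?thesis using \<open>a \<le> m\<close> \<open>b \<le> m\<close> by auto
    next
      assume "a \<le> m" "\<not> b \<le> m"
      then have "g (m - a) = h (b - m)" using eq unfolding f_def by auto
      moreover have "b - m \<le> n" "1 \<le> b - m" using b N_def \<open>\<not> b \<le> m\<close> by auto
      ultimately show ?thesis using disj[of "m - a" "b - m"] by auto
    next
      assume "\<not> a \<le> m" "b \<le> m"
      then have "g (m - b) = h (a - m)" using eq unfolding f_def by auto
      moreover have "a - m \<le> n" "1 \<le> a - m" using a N_def \<open>\<not> a \<le> m\<close> by auto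
      ultimately show ?thesis using disj[of "m - b" "a - m"] by auto
    next
      assume "\<not> a \<le> m" "\<not> b \<le> m"
      then have "h (a - m) = h (b - m)" using eq unfolding f_def by auto
      then have "a - m = b - m" using path_inj[OF acy hp] a b N_def by auto
      then show ?thesis using \<open>\<not> a \<le> m\<close> \<open>\<not> b \<le> m\<close> by auto
    qed
  qed
  define p where "p = map f [0..<Suc N]"
  have pn: "\<And>i. i < Suc N \<Longrightarrow> p ! i = f i" unfolding p_def by (subst nth_map_upt) auto
  have lp: "length p = Suc N" unfolding p_def by simp
  have "trek D p x y"
    unfolding trek_def
  proof (intro conjI allI impI)
    show "p \<noteq> []" using lp by auto
    show "hd p = x" proof - have "p \<noteq> []" using lp by auto then show ?thesis using pn[of 0] gh hd_conv_nth[of p] by (auto simp: f_def) qed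
    show "last p = y"
    proof -
      have "p \<noteq> []" using lp by auto then have "last p = f N" using pn[of N] lp last_conv_nth[of p] by simp
      also have "\<dots> = y" using fh[of N] gh N_def by auto
      finally show ?thesis .
    qed
    show "distinct p" unfolding p_def using inj by (simp only: distinct_map distinct_upt set_upt)
  next
    fix i assume "Suc i < length p"
    then show "(p ! i, p ! Suc i) \<in> D \<or> (p ! Suc i, p ! i) \<in> D"
      using E[of i] pn[of i] pn[of "Suc i"] lp by (auto split: if_splits)
  next
    fix i assume i: "Suc (Suc i) < length p"
    show "\<not> ((p ! i, p ! Suc i) \<in> D \<and> (p ! Suc (Suc i), p ! Suc i) \<in> D)"
    proof
      assume c: "(p ! i, p ! Suc i) \<in> D \<and> (p ! Suc (Suc i), p ! Suc i) \<in> D"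
      have c': "(f i, f (Suc i)) \<in> D" "(f (Suc (Suc i)), f (Suc i)) \<in> D"
        using c pn[of i] pn[of "Suc i"] pn[of "Suc (Suc i)"] i lp by auto
      show False
      proof (cases "Suc i \<le> m")
        case True
        then have "(f (Suc i), f i) \<in> D" using E[of i] i lp by auto
        then show False using two_cycle[OF acy c'(1)] by auto
      next
        case False
        then have "(f (Suc i), f (Suc (Suc i))) \<in> D" using E[of "Suc i"] i lp by auto
        then show False using two_cycle[OF acy c'(2)] by auto
      qed
    qed
  qed
  then show ?thesis by blast
qed


lemma clique_indep_unique:
  assumes "is_clique V U K" "independent_set V U S" "a \<in> K" "b \<in> K" "a \<in> S" "b \<in> S"
  shows "a = b"
  using assms unfolding is_clique_def independent_set_def by blast

lemma indep_card_le_cover: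
  assumes "undirected_graph V U" "independent_set V U S" "edge_clique_cover V U C" "finite C"
  shows "card S \<le> card C"
proof -
  define c where "c = (\<lambda>s. SOME K. K \<in> C \<and> s \<in> K)"
  have SV: "S \<subseteq> V" using assms(2) unfolding independent_set_def by auto
  have cs: "c s \<in> C \<and> s \<in> c s" if "s \<in> S" for s
  proof -
    have "\<exists>K. K \<in> C \<and> s \<in> K" using assms(3) SV that unfolding edge_clique_cover_def by blast
    then show ?thesis unfolding c_def by (rule someI_ex)
  qed
  have "inj_on c S"
  proof (rule inj_onI)
    fix a b assume "a \<in> S" "b \<in> S" "c a = c b"
    moreover have "is_clique V U (c a)" using cs[OF \<open>a \<in> S\<close>] assms(3)
      unfolding edge_clique_cover_def by auto
    ultimately show "a = b" using cs clique_indep_unique[OF _ assms(2)] by metis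
  qed
  moreover have "c ` S \<subseteq> C" using cs by auto
  ultimately show ?thesis using card_inj_on_le assms(4) by blast
qed

lemma cover_exists:
  assumes "undirected_graph V U"
  shows "\<exists>C. edge_clique_cover V U C \<and> finite C"
proof -
  have fV: "finite V" and UV: "U \<subseteq> V \<times> V" and sU: "sym U"
    using assms unfolding undirected_graph_def by auto
  have fU: "finite U" using fV UV finite_subset by blast
  define C where "C = (\<lambda>v. {v}) ` V \<union> (\<lambda>(x, y). {x, y}) ` U"
  have "finite C" unfolding C_def using fV fU by auto
  moreover have "edge_clique_cover V U C"
    unfolding edge_clique_cover_def
  proof (intro conjI ballI)
    fix K assume "K \<in> C"
    then consider v where "v \<in> V" "K = {v}" | x y where "(x, y) \<in> U" "K = {x, y}"
      unfolding C_def by auto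
    then show "is_clique V U K"
    proof cases
      case 1 then show ?thesis unfolding is_clique_def by auto
    next
      case 2
      then have "(y, x) \<in> U" using sU by (meson symD)
      then show ?thesis using 2 UV unfolding is_clique_def by auto
    qed
  next
    fix v assume "v \<in> V" then show "\<exists>K\<in>C. v \<in> K" unfolding C_def by auto
  next
    fix e assume "e \<in> U" then show "case e of (x, y) \<Rightarrow> \<exists>K\<in>C. x \<in> K \<and> y \<in> K"
    proof (cases e)
      case (Pair x y)
      then have "{x, y} \<in> C" using \<open>e \<in> U\<close> unfolding C_def by force
      then show ?thesis using Pair by auto
    qed
  qed
  ultimately show ?thesis by blast
qed

lemma delta_props:
  assumes "undirected_graph V U"
  shows "\<exists>C. edge_clique_cover V U C \<and> finite C \<and> card C = intersection_number V U"
    and "\<And>C. edge_clique_cover V U C \<Longrightarrow> finite C \<Longrightarrow> intersection_number V U \<le> card C"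
proof -
  obtain C0 where "edge_clique_cover V U C0 \<and> finite C0" using cover_exists[OF assms] by blast
  then have ex: "\<exists>k. \<exists>C. edge_clique_cover V U C \<and> finite C \<and> card C = k" by blast
  show "\<exists>C. edge_clique_cover V U C \<and> finite C \<and> card C = intersection_number V U"
    unfolding intersection_number_def by (rule LeastI_ex[OF ex])
  fix C assume "edge_clique_cover V U C" "finite C"
  then show "intersection_number V U \<le> card C"
    unfolding intersection_number_def by (intro Least_le) blast
qed

lemma alpha_props:
  assumes "undirected_graph V U"
  shows "\<exists>S. independent_set V U S \<and> card S = independence_number V U"
    and "\<And>S. independent_set V U S \<Longrightarrow> card S \<le> independence_number V U"
proof -
  define A where "A = {card S | S. independent_set V U S}"
  have fV: "finite V" using assms unfolding undirected_graph_def by auto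
  have "A \<subseteq> {..card V}"
  proof
    fix a assume "a \<in> A"
    then obtain S where "a = card S" "S \<subseteq> V" unfolding A_def independent_set_def by auto
    then show "a \<in> {..card V}" using card_mono[OF fV] by auto
  qed
  then have fA: "finite A" using finite_subset by blast
  have "independent_set V U {}" unfolding independent_set_def by auto
  then have "card {} \<in> A" unfolding A_def by (intro CollectI exI[of _ "{}"]) simp
  then have "0 \<in> A" by simp
  then have neA: "A \<noteq> {}" by auto
  show "\<exists>S. independent_set V U S \<and> card S = independence_number V U"
    using Max_in[OF fA neA] unfolding independence_number_def A_def by auto
  fix S assume "independent_set V U S"
  then show "card S \<le> independence_number V U"
    using Max_ge[OF fA] unfolding independence_number_def A_def by blast
qed

lemma alpha_le_delta:
  assumes "undirected_graph V U"
  shows "independence_number V U \<le> intersection_number V U"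
proof -
  obtain S where S: "independent_set V U S" "card S = independence_number V U"
    using alpha_props(1)[OF assms] by blast
  obtain C where C: "edge_clique_cover V U C" "finite C" "card C = intersection_number V U"
    using delta_props(1)[OF assms] by blast
  show ?thesis using indep_card_le_cover[OF assms S(1) C(1,2)] S C by simp
qed


lemma dir1:
  assumes ug: "undirected_graph V U" and dg: "dag V D" and Ueq: "U = udg V D"
  shows "intersection_number V U \<le> independence_number V U"
proof -
  have fV: "finite V" using ug unfolding undirected_graph_def by auto
  have DV: "D \<subseteq> V \<times> V" and acy: "acyclic D" using dg unfolding dag_def by auto
  have fD: "finite D" using fV DV finite_subset by blast
  have wfD: "wf D" using finite_acyclic_wf[OF fD acy] .
  define S where "S = {s \<in> V. \<forall>a. (a, s) \<notin> D}"
  have src: "x \<in> V \<longrightarrow> (\<exists>s\<in>S. (s, x) \<in> D\<^sup>*)" for x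
    using wfD
  proof (induction x rule: wf_induct_rule)
    case (less x)
    show ?case
    proof
      assume xV: "x \<in> V"
      show "\<exists>s\<in>S. (s, x) \<in> D\<^sup>*"
      proof (cases "\<exists>a. (a, x) \<in> D")
        case True
        then obtain a where a: "(a, x) \<in> D" by blast
        then have "a \<in> V" using DV by auto
        then obtain s where "s \<in> S" "(s, a) \<in> D\<^sup>*" using less a by blast
        then show ?thesis using a by (meson rtrancl_into_rtrancl)
      next
        case False
        then have "x \<in> S" using xV unfolding S_def by auto
        then show ?thesis by blast
      qed
    qed
  qed
  have inV: "t \<in> V" if "(t, x) \<in> D\<^sup>*" "x \<in> V" for t x
    using that(1)
  proof (cases rule: converse_rtranclE)
    case base then show ?thesis using that by simp
  next
    case (step y) then show ?thesis using DV by auto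
  qed
  have srcanc: "t = s" if "(t, s) \<in> D\<^sup>*" "s \<in> S" for t s
    using that(1)
  proof (cases rule: rtranclE)
    case base then show ?thesis by simp
  next
    case (step y) then show ?thesis using that(2) unfolding S_def by auto
  qed
  have inU: "(x, y) \<in> U" if "x \<in> V" "y \<in> V" "x \<noteq> y" "\<exists>p. trek D p x y" for x y
    using that unfolding Ueq udg_def by auto
  define K where "K = (\<lambda>s. {x \<in> V. (s, x) \<in> D\<^sup>*})"
  define C where "C = K ` S"
  have SV: "S \<subseteq> V" unfolding S_def by auto
  have fS: "finite S" using fV SV finite_subset by blast
  have fC: "finite C" unfolding C_def using fS by auto
  have cov: "edge_clique_cover V U C"
    unfolding edge_clique_cover_def
  proof (intro conjI ballI)
    fix Q assume "Q \<in> C"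
    then obtain s where s: "s \<in> S" "Q = K s" unfolding C_def by auto
    show "is_clique V U Q"
      unfolding is_clique_def
    proof (intro conjI ballI impI)
      show "Q \<noteq> {}" using s SV unfolding K_def by auto
      show "Q \<subseteq> V" using s unfolding K_def by auto
    next
      fix x y assume "x \<in> Q" "y \<in> Q" "x \<noteq> y"
      then have "x \<in> V" "y \<in> V" "(s, x) \<in> D\<^sup>*" "(s, y) \<in> D\<^sup>*" "x \<noteq> y"
        using s unfolding K_def by auto
      then show "(x, y) \<in> U" using inU common_ancestor_trek[OF acy] by blast
    qed
  next
    fix v assume "v \<in> V"
    then obtain s where "s \<in> S" "(s, v) \<in> D\<^sup>*" using src by blast
    then have "K s \<in> C" "v \<in> K s" using \<open>v \<in> V\<close> unfolding C_def K_def by auto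
    then show "\<exists>Q\<in>C. v \<in> Q" by blast
  next
    fix e assume eU: "e \<in> U"
    show "case e of (x, y) \<Rightarrow> \<exists>Q\<in>C. x \<in> Q \<and> y \<in> Q"
    proof (cases e)
      case (Pair x y)
      have "(x, y) \<in> udg V D" using eU Pair Ueq by simp
      then have xy: "x \<in> V" "y \<in> V" and ex: "\<exists>p. trek D p x y" unfolding udg_def by auto
      from ex obtain p where "trek D p x y" by blast
      from trek_common_ancestor[OF this] obtain t where t: "(t, x) \<in> D\<^sup>*" "(t, y) \<in> D\<^sup>*"
        by blast
      have "t \<in> V" using inV[OF t(1) xy(1)] .
      then obtain s where s: "s \<in> S" "(s, t) \<in> D\<^sup>*" using src by blast
      have "(s, x) \<in> D\<^sup>*" "(s, y) \<in> D\<^sup>*" using s t by auto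
      then have "x \<in> K s" "y \<in> K s" using xy unfolding K_def by auto
      moreover have "K s \<in> C" using s unfolding C_def by auto
      ultimately show ?thesis using Pair by auto
    qed
  qed
  have ind: "independent_set V U S"
    unfolding independent_set_def
  proof (intro conjI ballI)
    show "S \<subseteq> V" by (rule SV)
  next
    fix a b assume ab: "a \<in> S" "b \<in> S"
    show "(a, b) \<notin> U"
    proof
      assume "(a, b) \<in> U"
      then have "(a, b) \<in> udg V D" using Ueq by simp
      then have "a \<noteq> b" and ex: "\<exists>p. trek D p a b" unfolding udg_def by auto
      from ex obtain p where "trek D p a b" by blast
      from trek_common_ancestor[OF this] obtain t where t: "(t, a) \<in> D\<^sup>*" "(t, b) \<in> D\<^sup>*"
        by blast
      have "t = a" using srcanc[OF t(1) ab(1)] .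
      moreover have "t = b" using srcanc[OF t(2) ab(2)] .
      ultimately show False using \<open>a \<noteq> b\<close> by simp
    qed
  qed
  have "intersection_number V U \<le> card C" using delta_props(2)[OF ug cov fC] .
  also have "\<dots> \<le> card S" unfolding C_def using card_image_le[OF fS] .
  also have "\<dots> \<le> independence_number V U" using alpha_props(2)[OF ug ind] .
  finally show ?thesis .
qed


lemma trek2:
  assumes "(a, b) \<in> D \<or> (b, a) \<in> D" "a \<noteq> b"
  shows "trek D [a, b] a b"
  using assms unfolding trek_def by (auto simp: less_Suc_eq)

lemma trek3:
  assumes "(s, a) \<in> D" "(s, b) \<in> D" "a \<noteq> s" "s \<noteq> b" "a \<noteq> b" "(a, s) \<notin> D"
  shows "trek D [a, s, b] a b"
  using assms unfolding trek_def by (auto simp: less_Suc_eq)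

lemma dir2:
  assumes ug: "undirected_graph V U"
    and eq: "independence_number V U = intersection_number V U"
  shows "UEC_representative V U"
proof -
  have fV: "finite V" and UV: "U \<subseteq> V \<times> V" and sU: "sym U" and irr: "irrefl U"
    using ug unfolding undirected_graph_def by auto
  obtain S0 where S0: "independent_set V U S0" "card S0 = independence_number V U"
    using alpha_props(1)[OF ug] by blast
  obtain C where C: "edge_clique_cover V U C" "finite C" "card C = intersection_number V U"
    using delta_props(1)[OF ug] by blast
  have SV: "S0 \<subseteq> V" using S0 unfolding independent_set_def by auto
  have fS: "finite S0" using fV SV finite_subset by blast
  define c where "c = (\<lambda>s. SOME K. K \<in> C \<and> s \<in> K)"
  have cs: "c s \<in> C \<and> s \<in> c s" if "s \<in> S0" for s
  proof -
    have "\<exists>K. K \<in> C \<and> s \<in> K" using C(1) SV that unfolding edge_clique_cover_def by blast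
    then show ?thesis unfolding c_def by (rule someI_ex)
  qed
  have clq: "is_clique V U K" if "K \<in> C" for K
    using C(1) that unfolding edge_clique_cover_def by auto
  have uniq: "a = b" if "K \<in> C" "a \<in> K" "b \<in> K" "a \<in> S0" "b \<in> S0" for K a b
    using clique_indep_unique[OF clq[OF that(1)] S0(1)] that by auto
  have injc: "inj_on c S0"
  proof (rule inj_onI)
    fix a b assume ab: "a \<in> S0" "b \<in> S0" "c a = c b"
    then show "a = b" using uniq[of "c a" a b] cs[OF ab(1)] cs[OF ab(2)] by auto
  qed
  have sub: "c ` S0 \<subseteq> C" using cs by auto
  have "card (c ` S0) = card C" using card_image[OF injc] S0(2) C(3) eq by simp
  then have img: "c ` S0 = C" using card_subset_eq[OF C(2) sub] by simp
  have KS: "K = c s" if hh: "K \<in> C" "s \<in> S0" "s \<in> K" for K s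
  proof -
    obtain s' where s': "s' \<in> S0" "K = c s'" using img hh(1) by blast
    then have "s' \<in> K" using cs by auto
    then have "s = s'" using uniq[OF hh(1) hh(3) _ hh(2) s'(1)] by simp
    then show ?thesis using s' by simp
  qed
  have Khas: "\<exists>s\<in>S0. s \<in> K" if hh: "K \<in> C" for K
  proof -
    obtain s where "s \<in> S0" "K = c s" using img hh by blast
    then show ?thesis using cs by auto
  qed
  define D where "D = {(s, x). s \<in> S0 \<and> x \<in> V \<and> x \<notin> S0 \<and> x \<in> c s}"
  have Dmem: "(a, b) \<in> D \<longleftrightarrow> a \<in> S0 \<and> b \<in> V \<and> b \<notin> S0 \<and> b \<in> c a" for a b
    unfolding D_def by simp
  have trD: "(a, b) \<in> D" if "(a, b) \<in> D\<^sup>+" for a b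
    using that
  proof (induction rule: trancl_induct)
    case (base y) then show ?case .
  next
    case (step y z)
    then show ?case unfolding D_def by auto
  qed
  have acy: "acyclic D"
    unfolding acyclic_def
  proof
    fix a show "(a, a) \<notin> D\<^sup>+"
    proof
      assume "(a, a) \<in> D\<^sup>+"
      then have "(a, a) \<in> D" by (rule trD)
      then show False unfolding D_def by auto
    qed
  qed
  have rt: "a = b \<or> (a, b) \<in> D" if "(a, b) \<in> D\<^sup>*" for a b
    using that trD by (auto simp: rtrancl_eq_or_trancl)
  have "D \<subseteq> V \<times> V" unfolding D_def using SV by auto
  then have dagD: "dag V D" unfolding dag_def using acy by auto
  have cU: "(x, y) \<in> U" if "s \<in> S0" "x \<in> c s" "y \<in> c s" "x \<noteq> y" for s x y
    using clq[of "c s"] cs[OF that(1)] that unfolding is_clique_def by auto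
  have "U = udg V D"
  proof (intro set_eqI iffI)
    fix e assume eU: "e \<in> U"
    obtain x y where e: "e = (x, y)" by (cases e)
    have xy: "x \<in> V" "y \<in> V" "x \<noteq> y" using eU e UV irr unfolding irrefl_def by auto
    obtain K where K: "K \<in> C" "x \<in> K" "y \<in> K"
      using C(1) eU e unfolding edge_clique_cover_def by blast
    obtain s where s: "s \<in> S0" "s \<in> K" using Khas[OF K(1)] by blast
    have Kc: "K = c s" using KS[OF K(1) s(1) s(2)] .
    have xc: "x \<in> c s" "y \<in> c s" using K(2,3) Kc by auto
    have "\<exists>p. trek D p x y"
    proof (cases "x = s")
      case True
      then have "y \<notin> S0" using uniq[OF K(1) K(3) s(2) _ s(1)] xy by auto
      then have "(x, y) \<in> D" unfolding Dmem using True s(1) xy(2) xc(2) by simp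
      then have "trek D [x, y] x y" using trek2[of x y D] xy(3) by simp
        then show ?thesis by blast
    next
      case xs: False
      show ?thesis
      proof (cases "y = s")
        case True
        then have "x \<notin> S0" using uniq[OF K(1) K(2) s(2) _ s(1)] xy by auto
        then have "(y, x) \<in> D" unfolding Dmem using True s(1) xy(1) xc(1) by simp
        then have "trek D [x, y] x y" using trek2[of x y D] xy(3) by simp
        then show ?thesis by blast
      next
        case False
        have "x \<notin> S0" using uniq[OF K(1) K(2) s(2) _ s(1)] xs by auto
        moreover have "y \<notin> S0" using uniq[OF K(1) K(3) s(2) _ s(1)] False by auto
        ultimately have "(s, x) \<in> D" "(s, y) \<in> D" "(x, s) \<notin> D"
          unfolding Dmem using s(1) xy xc by simp_all
        moreover have "x \<noteq> s" "s \<noteq> y" using xs False by auto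
        ultimately have "trek D [x, s, y] x y" using trek3[of s x D y] xy(3) by blast
        then show ?thesis by blast
      qed
    qed
    then show "e \<in> udg V D" unfolding udg_def e using xy by blast
  next
    fix e assume eD: "e \<in> udg V D"
    obtain x y where e: "e = (x, y)" by (cases e)
    have xy: "x \<in> V" "y \<in> V" "x \<noteq> y" and ex: "\<exists>p. trek D p x y"
      using eD e unfolding udg_def by auto
    from ex obtain p where "trek D p x y" by blast
    from trek_common_ancestor[OF this] obtain t where t: "(t, x) \<in> D\<^sup>*" "(t, y) \<in> D\<^sup>*"
      by blast
    have "(x, y) \<in> U"
    proof (cases "t = x")
      case True
      then have "(x, y) \<in> D" using rt[OF t(2)] xy by auto
      then have "x \<in> S0" "y \<in> c x" unfolding D_def by auto
      then show ?thesis using cU[OF _ _ _ xy(3)] cs[of x] by blast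
    next
      case tx: False
      then have tx': "(t, x) \<in> D" using rt[OF t(1)] by auto
      show ?thesis
      proof (cases "t = y")
        case True
        then have "(y, x) \<in> D" using tx' by auto
        then have "y \<in> S0" "x \<in> c y" unfolding D_def by auto
        then show ?thesis using cU[OF _ _ _ xy(3)] cs[of y] by blast
      next
        case False
        then have "(t, y) \<in> D" using rt[OF t(2)] by auto
        then have "t \<in> S0" "x \<in> c t" "y \<in> c t" using tx' unfolding D_def by auto
        then show ?thesis using cU[OF _ _ _ xy(3)] by blast
      qed
    qed
    then show "e \<in> U" using e by simp
  qed
  then show ?thesis unfolding UEC_representative_def using dagD by blast
qed

theorem theorem2p9:
  fixes V :: "'a set" and U :: "'a rel"
  assumes "undirected_graph V U"
  shows "UEC_representative V U \<longleftrightarrow> independence_number V U = intersection_number V U"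
proof
  assume "UEC_representative V U"
  then obtain D where "dag V D" "U = udg V D" unfolding UEC_representative_def by blast
  then show "independence_number V U = intersection_number V U"
    using dir1[OF assms] alpha_le_delta[OF assms] by fastforce
next
  assume "independence_number V U = intersection_number V U"
  then show "UEC_representative V U" using dir2[OF assms] by blast
qed

end
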